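(* Let $H:\mathbb{R}^{2n}\to\mathbb{R}$ be smooth and let $\hat H(y,t)$ be a smooth function on $V\times U$ ($V\subseteq\mathbb{R}^{2n}$ open, $U\ni 0$ an open interval) satisfying $$\frac{\partial}{\partial t}\big(t\,\hat H(y,t)\big)=H\Big(y+\frac{t}{2}J^{-1}\nabla_y\hat H(y,t)\Big)\quad\text{for all }(y,t)\in V\times U.$$ Then, writing $\hat H=\hat H(y,h)$ and $H=H(y)$, as $h\to 0$ (locally uniformly in $y\in V$), $$H=\hat H-\frac{h^2}{24}\,\nabla^2\hat H\big(J^{-1}\nabla H,\ J^{-1}\nabla H\big)+O(h^4),$$ where $\nabla^2\hat H(v,v)=v^{\top}\nabla_y^2\hat H\,v$ denotes the Hessian quadratic form.
   Context: $J=\begin{pmatrix}0 & I_n\\ -I_n & 0\end{pmatrix}$. The PDE is the Hamilton–Jacobi equation satisfied by the time-dependent modified Hamiltonian of the implicit midpoint rule $y_1=y_0+hJ^{-1}\nabla H\big(\tfrac{y_0+y_1}{2}\big)$, i.e. the function with $J^{-1}\nabla\hat H\big(\tfrac{y_0+y_1}{2},h\big)=(y_1-y_0)/h$ where $y_1$ is the exact time-$h$ flow of $\dot y=J^{-1}\nabla H(y)$. *)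

theory Defs
  imports "HOL-Analysis.Analysis"
begin

text \<open>J = [[0, I],[-I, 0]], so J(q,p) = (p,-q) and J^{-1}(a,b) = (-b,a).\<close>
definition Jmat :: "((real^'n) \<times> (real^'n)) \<Rightarrow> ((real^'n) \<times> (real^'n))" where
  "Jmat z = (snd z, - fst z)"

definition Jinv :: "((real^'n) \<times> (real^'n)) \<Rightarrow> ((real^'n) \<times> (real^'n))" where
  "Jinv z = (- snd z, fst z)"

fun iter_dderiv :: "('a::real_normed_vector \<Rightarrow> real) \<Rightarrow> 'a list \<Rightarrow> 'a \<Rightarrow> real" where
  "iter_dderiv f [] = f"
| "iter_dderiv f (v # vs) = (\<lambda>x. frechet_derivative (iter_dderiv f vs) (at x) v)"

definition smooth_on :: "'a::real_normed_vector set \<Rightarrow> ('a \<Rightarrow> real) \<Rightarrow> bool" where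
  "smooth_on S f \<longleftrightarrow> (\<forall>vs. \<forall>x\<in>S. iter_dderiv f vs differentiable (at x))"

definition grad :: "('a::euclidean_space \<Rightarrow> real) \<Rightarrow> 'a \<Rightarrow> 'a" where
  "grad f x = (\<Sum>b\<in>Basis. frechet_derivative f (at x) b *\<^sub>R b)"

definition hess_form :: "('a::real_normed_vector \<Rightarrow> real) \<Rightarrow> 'a \<Rightarrow> 'a \<Rightarrow> real" where
  "hess_form f x v = frechet_derivative (\<lambda>z. frechet_derivative f (at z) v) (at x) v"

end

theory Submission
  imports Defs
begin

section \<open>Generic facts about iterated directional derivatives\<close>

lemma lin_expand:
  fixes g :: "'a::euclidean_space \<Rightarrow> real"
  assumes "linear g"
  shows "g u = (\<Sum>b\<in>Basis. (u \<bullet> b) * g b)"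
proof -
  have "g u = g (\<Sum>b\<in>Basis. (u \<bullet> b) *\<^sub>R b)" by (simp add: euclidean_representation)
  also have "\<dots> = (\<Sum>b\<in>Basis. (u \<bullet> b) * g b)"
    using assms by (simp add: linear_sum linear_scale o_def)
  finally show ?thesis .
qed

lemma smooth_deriv:
  assumes "smooth_on S f" "x \<in> S"
  shows "(iter_dderiv f vs has_derivative (\<lambda>u. iter_dderiv f (u#vs) x)) (at x)"
proof -
  have "iter_dderiv f vs differentiable (at x)" using assms by (auto simp: smooth_on_def)
  then show ?thesis by (simp add: frechet_derivative_works)
qed

lemma smooth_cont_at:
  assumes "smooth_on S f" "x \<in> S"
  shows "continuous (at x) (iter_dderiv f vs)"
  using assms by (auto simp: smooth_on_def intro: differentiable_imp_continuous_within)

lemma smooth_cont: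
  assumes "smooth_on S f"
  shows "continuous_on S (iter_dderiv f vs)"
  using smooth_cont_at[OF assms] by (simp add: continuous_at_imp_continuous_on)

lemma deriv_eq:
  assumes "(g has_derivative G) (at x)" "open S" "x \<in> S" "\<And>z. z \<in> S \<Longrightarrow> g z = f z"
  shows "frechet_derivative f (at x) = G"
  using has_derivative_transform_within_open[OF assms] frechet_derivative_at by metis

lemma lin_depth:
  fixes f :: "'a::euclidean_space \<Rightarrow> real"
  assumes sm: "smooth_on S f" and S: "open S"
  shows "x \<in> S \<Longrightarrow> iter_dderiv f (ws @ u # vs) x = (\<Sum>b\<in>Basis. (u \<bullet> b) * iter_dderiv f (ws @ b # vs) x)"
proof (induction ws arbitrary: x)
  case Nil
  have "linear (\<lambda>u. iter_dderiv f (u#vs) x)"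
    using smooth_deriv[OF sm Nil] has_derivative_linear by blast
  then show ?case using lin_expand by auto
next
  case (Cons a ws)
  have d: "((\<lambda>z. \<Sum>b\<in>Basis. (u \<bullet> b) * iter_dderiv f (ws @ b # vs) z) has_derivative
      (\<lambda>d. \<Sum>b\<in>Basis. (u \<bullet> b) * iter_dderiv f (d # ws @ b # vs) x)) (at x)"
    by (intro has_derivative_sum has_derivative_mult_right smooth_deriv[OF sm Cons.prems])
  have "frechet_derivative (iter_dderiv f (ws @ u # vs)) (at x) =
      (\<lambda>d. \<Sum>b\<in>Basis. (u \<bullet> b) * iter_dderiv f (d # ws @ b # vs) x)"
    by (rule deriv_eq[OF d S Cons.prems]) (rule Cons.IH[symmetric])
  then show ?case by simp
qed

lemma lin_depth_linear:
  fixes f :: "'a::euclidean_space \<Rightarrow> real"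
  assumes "smooth_on S f" "open S" "x \<in> S"
  shows "linear (\<lambda>u. iter_dderiv f (ws @ u # vs) x)"
proof -
  have "linear (\<lambda>u. \<Sum>b\<in>Basis. (u \<bullet> b) * iter_dderiv f (ws @ b # vs) x)"
  proof -
    have "(\<lambda>u. \<Sum>b\<in>Basis. (u \<bullet> b) * iter_dderiv f (ws @ b # vs) x) =
        (\<lambda>u. u \<bullet> (\<Sum>b\<in>Basis. iter_dderiv f (ws @ b # vs) x *\<^sub>R b))"
      by (simp add: inner_sum_right mult.commute)
    then show ?thesis using bounded_linear_inner_left bounded_linear.linear by metis
  qed
  moreover have "(\<lambda>u. iter_dderiv f (ws @ u # vs) x) = (\<lambda>u. \<Sum>b\<in>Basis. (u \<bullet> b) * iter_dderiv f (ws @ b # vs) x)"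
    by (intro ext lin_depth[OF assms(1,2,3)])
  ultimately show ?thesis by simp
qed

lemma lin_scale:
  fixes f :: "'a::euclidean_space \<Rightarrow> real"
  assumes "smooth_on S f" "open S" "x \<in> S"
  shows "iter_dderiv f (ws @ (c *\<^sub>R u) # vs) x = c * iter_dderiv f (ws @ u # vs) x"
  using linear_scale[OF lin_depth_linear[OF assms, of ws vs]] by simp

lemma lin_zero:
  fixes f :: "'a::euclidean_space \<Rightarrow> real"
  assumes "smooth_on S f" "open S" "x \<in> S"
  shows "iter_dderiv f (ws @ 0 # vs) x = 0"
  using linear_0[OF lin_depth_linear[OF assms, of ws vs]] by simp


lemma lin_head:
  fixes f :: "'a::euclidean_space \<Rightarrow> real"
  assumes "smooth_on S f" "open S" "x \<in> S"
  shows "iter_dderiv f (u # vs) x = (\<Sum>b\<in>Basis. (u \<bullet> b) * iter_dderiv f (b # vs) x)"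
  using lin_depth[OF assms, where ws="[]" and u=u and vs=vs] by simp

lemma lin_2:
  fixes f :: "'a::euclidean_space \<Rightarrow> real"
  assumes "smooth_on S f" "open S" "x \<in> S"
  shows "iter_dderiv f (a # u # vs) x = (\<Sum>b\<in>Basis. (u \<bullet> b) * iter_dderiv f (a # b # vs) x)"
  using lin_depth[OF assms, where ws="[a]" and u=u and vs=vs] by simp

declare iter_dderiv.simps(2)[simp del]

lemma line_deriv:
  fixes f :: "'a::real_normed_vector \<Rightarrow> real"
  assumes "(f has_derivative F) (at (p + s *\<^sub>R a))"
  shows "((\<lambda>s. f (p + s *\<^sub>R a)) has_real_derivative F a) (at s)"
proof -
  have l: "linear F" using assms has_derivative_linear by blast
  have g: "((\<lambda>s. p + s *\<^sub>R a) has_derivative (\<lambda>d. d *\<^sub>R a)) (at s)"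
    by (auto intro!: derivative_eq_intros)
  have "((\<lambda>s. f (p + s *\<^sub>R a)) has_derivative (\<lambda>d. F (d *\<^sub>R a))) (at s)"
    using has_derivative_compose[OF g assms] .
  moreover have "(\<lambda>d. F (d *\<^sub>R a)) = (*) (F a)"
    using linear_scale[OF l] by (auto simp: mult.commute)
  ultimately show ?thesis by (simp add: has_field_derivative_def)
qed

lemma schwarz_gen:
  fixes f :: "'a::real_normed_vector \<Rightarrow> real"
  assumes S: "open S" "x \<in> S"
    and d1: "\<And>z. z \<in> S \<Longrightarrow> (f has_derivative Df z) (at z)"
    and da: "\<And>z. z \<in> S \<Longrightarrow> ((\<lambda>w. Df w a) has_derivative Dfa z) (at z)"
    and db: "\<And>z. z \<in> S \<Longrightarrow> ((\<lambda>w. Df w b) has_derivative Dfb z) (at z)"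
    and ca: "continuous (at x) (\<lambda>z. Dfa z b)"
    and cb: "continuous (at x) (\<lambda>z. Dfb z a)"
  shows "Dfa x b = Dfb x a"
proof (rule ccontr)
  assume ne: "Dfa x b \<noteq> Dfb x a"
  define e where "e = \<bar>Dfa x b - Dfb x a\<bar> / 2"
  have e: "e > 0" using ne by (simp add: e_def)
  obtain r1 where r1: "r1 > 0" "\<And>z. dist z x < r1 \<Longrightarrow> \<bar>Dfa z b - Dfa x b\<bar> < e"
    using ca e unfolding continuous_at_eps_delta dist_real_def by blast
  obtain r2 where r2: "r2 > 0" "\<And>z. dist z x < r2 \<Longrightarrow> \<bar>Dfb z a - Dfb x a\<bar> < e"
    using cb e unfolding continuous_at_eps_delta dist_real_def by blast
  obtain r3 where r3: "r3 > 0" "ball x r3 \<subseteq> S"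
    using S open_contains_ball by blast
  define r where "r = min r1 (min r2 r3)"
  have r: "r > 0" using r1 r2 r3 by (simp add: r_def)
  define h where "h = r / (2 * (norm a + norm b + 1))"
  have ab: "norm a + norm b + 1 > 0" by (smt (verit) norm_ge_zero)
  have h: "h > 0" using r ab by (simp add: h_def)
  have bnd: "dist (x + \<sigma> *\<^sub>R a + \<tau> *\<^sub>R b) x < r"
    if "0 \<le> \<sigma>" "\<sigma> \<le> h" "0 \<le> \<tau>" "\<tau> \<le> h" for \<sigma> \<tau>
  proof -
    have "dist (x + \<sigma> *\<^sub>R a + \<tau> *\<^sub>R b) x = norm (\<sigma> *\<^sub>R a + \<tau> *\<^sub>R b)"
      by (simp add: dist_norm)
    also have "\<dots> \<le> \<sigma> * norm a + \<tau> * norm b"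
      using that norm_triangle_ineq[of "\<sigma> *\<^sub>R a" "\<tau> *\<^sub>R b"] by simp
    also have "\<dots> \<le> h * norm a + h * norm b"
      using that by (intro add_mono mult_right_mono) auto
    also have "\<dots> < h * (2 * (norm a + norm b + 1))"
      using h ab by (simp add: algebra_simps) (smt (verit) mult_nonneg_nonneg norm_ge_zero)
    also have "\<dots> = r" using r ab by (simp add: h_def)
    finally show ?thesis .
  qed
  have inS: "x + \<sigma> *\<^sub>R a + \<tau> *\<^sub>R b \<in> S" 
    and cA: "\<bar>Dfa (x + \<sigma> *\<^sub>R a + \<tau> *\<^sub>R b) b - Dfa x b\<bar> < e"
    and cB: "\<bar>Dfb (x + \<sigma> *\<^sub>R a + \<tau> *\<^sub>R b) a - Dfb x a\<bar> < e"
    if "0 \<le> \<sigma>" "\<sigma> \<le> h" "0 \<le> \<tau>" "\<tau> \<le> h" for \<sigma> \<tau>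
    using bnd[OF that] r3 r1 r2 unfolding r_def by (auto simp: dist_commute)
  define \<Delta> where "\<Delta> = f (x + h *\<^sub>R a + h *\<^sub>R b) - f (x + h *\<^sub>R a + 0 *\<^sub>R b)
     - f (x + 0 *\<^sub>R a + h *\<^sub>R b) + f (x + 0 *\<^sub>R a + 0 *\<^sub>R b)"
  have pt: "\<And>\<sigma> \<tau>. (x + \<tau> *\<^sub>R b) + \<sigma> *\<^sub>R a = x + \<sigma> *\<^sub>R a + \<tau> *\<^sub>R b"
    by (simp add: algebra_simps)
  obtain p1 where p1: "\<Delta> = h * (h * Dfa p1 b)" "\<bar>Dfa p1 b - Dfa x b\<bar> < e"
  proof -
    define \<alpha> where "\<alpha> s = f ((x + h *\<^sub>R b) + s *\<^sub>R a) - f ((x + 0 *\<^sub>R b) + s *\<^sub>R a)" for s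
    have "\<exists>z>0. z < h \<and> \<alpha> h - \<alpha> 0 = (h - 0) * (Df (x + z *\<^sub>R a + h *\<^sub>R b) a - Df (x + z *\<^sub>R a + 0 *\<^sub>R b) a)"
    proof (rule MVT2[OF h])
      fix s assume s: "0 \<le> s" "s \<le> h"
      show "(\<alpha> has_real_derivative Df (x + s *\<^sub>R a + h *\<^sub>R b) a - Df (x + s *\<^sub>R a + 0 *\<^sub>R b) a) (at s)"
      proof -
        have e1: "(f has_derivative Df (x + s *\<^sub>R a + h *\<^sub>R b)) (at ((x + h *\<^sub>R b) + s *\<^sub>R a))"
          using d1[OF inS[of s h]] s h by (simp add: pt)
        have e2: "(f has_derivative Df (x + s *\<^sub>R a + 0 *\<^sub>R b)) (at ((x + 0 *\<^sub>R b) + s *\<^sub>R a))"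
          using d1[OF inS[of s 0]] s h by (simp only: pt)
        show ?thesis unfolding \<alpha>_def by (intro DERIV_diff line_deriv e1 e2)
      qed
    qed
    then obtain \<sigma> where \<sigma>: "0 < \<sigma>" "\<sigma> < h"
      "\<alpha> h - \<alpha> 0 = h * (Df (x + \<sigma> *\<^sub>R a + h *\<^sub>R b) a - Df (x + \<sigma> *\<^sub>R a + 0 *\<^sub>R b) a)" by auto
    define \<beta> where "\<beta> t = Df ((x + \<sigma> *\<^sub>R a) + t *\<^sub>R b) a" for t
    have "\<exists>z>0. z < h \<and> \<beta> h - \<beta> 0 = (h - 0) * Dfa (x + \<sigma> *\<^sub>R a + z *\<^sub>R b) b"
    proof (rule MVT2[OF h])
      fix t assume t: "0 \<le> t" "t \<le> h"
      show "(\<beta> has_real_derivative Dfa (x + \<sigma> *\<^sub>R a + t *\<^sub>R b) b) (at t)"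
        unfolding \<beta>_def by (rule line_deriv[where f="\<lambda>w. Df w a"]) (use t \<sigma> inS da in auto)
    qed
    then obtain \<tau> where \<tau>: "0 < \<tau>" "\<tau> < h" "\<beta> h - \<beta> 0 = h * Dfa (x + \<sigma> *\<^sub>R a + \<tau> *\<^sub>R b) b"
      by auto
    have "\<Delta> = \<alpha> h - \<alpha> 0" unfolding \<Delta>_def \<alpha>_def by (simp add: algebra_simps)
    also have "\<dots> = h * (\<beta> h - \<beta> 0)" using \<sigma>(3) unfolding \<beta>_def by simp
    finally have "\<Delta> = h * (h * Dfa (x + \<sigma> *\<^sub>R a + \<tau> *\<^sub>R b) b)" using \<tau> by simp
    then show ?thesis using that cA[of \<sigma> \<tau>] \<sigma> \<tau> by auto
  qed
  obtain p2 where p2: "\<Delta> = h * (h * Dfb p2 a)" "\<bar>Dfb p2 a - Dfb x a\<bar> < e"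
  proof -
    define \<alpha> where "\<alpha> t = f ((x + h *\<^sub>R a) + t *\<^sub>R b) - f ((x + 0 *\<^sub>R a) + t *\<^sub>R b)" for t
    have "\<exists>z>0. z < h \<and> \<alpha> h - \<alpha> 0 = (h - 0) * (Df (x + h *\<^sub>R a + z *\<^sub>R b) b - Df (x + 0 *\<^sub>R a + z *\<^sub>R b) b)"
    proof (rule MVT2[OF h])
      fix s assume s: "0 \<le> s" "s \<le> h"
      show "(\<alpha> has_real_derivative Df (x + h *\<^sub>R a + s *\<^sub>R b) b - Df (x + 0 *\<^sub>R a + s *\<^sub>R b) b) (at s)"
      proof -
        have e1: "(f has_derivative Df (x + h *\<^sub>R a + s *\<^sub>R b)) (at ((x + h *\<^sub>R a) + s *\<^sub>R b))"
          using d1[OF inS[of h s]] s h by simp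
        have e2: "(f has_derivative Df (x + 0 *\<^sub>R a + s *\<^sub>R b)) (at ((x + 0 *\<^sub>R a) + s *\<^sub>R b))"
          using d1[OF inS[of 0 s]] s h by simp
        show ?thesis unfolding \<alpha>_def by (intro DERIV_diff line_deriv e1 e2)
      qed
    qed
    then obtain \<tau> where \<tau>: "0 < \<tau>" "\<tau> < h"
      "\<alpha> h - \<alpha> 0 = h * (Df (x + h *\<^sub>R a + \<tau> *\<^sub>R b) b - Df (x + 0 *\<^sub>R a + \<tau> *\<^sub>R b) b)" by auto
    define \<beta> where "\<beta> s = Df ((x + \<tau> *\<^sub>R b) + s *\<^sub>R a) b" for s
    have "\<exists>z>0. z < h \<and> \<beta> h - \<beta> 0 = (h - 0) * Dfb (x + z *\<^sub>R a + \<tau> *\<^sub>R b) a"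
    proof (rule MVT2[OF h])
      fix s assume s: "0 \<le> s" "s \<le> h"
      show "(\<beta> has_real_derivative Dfb (x + s *\<^sub>R a + \<tau> *\<^sub>R b) a) (at s)"
      proof -
        have "((\<lambda>w. Df w b) has_derivative Dfb (x + s *\<^sub>R a + \<tau> *\<^sub>R b)) (at ((x + \<tau> *\<^sub>R b) + s *\<^sub>R a))"
          using db[OF inS[of s \<tau>]] s \<tau> by (simp only: pt)
        then show ?thesis unfolding \<beta>_def by (rule line_deriv)
      qed
    qed
    then obtain \<sigma> where \<sigma>: "0 < \<sigma>" "\<sigma> < h" "\<beta> h - \<beta> 0 = h * Dfb (x + \<sigma> *\<^sub>R a + \<tau> *\<^sub>R b) a"
      by auto
    have "\<Delta> = \<alpha> h - \<alpha> 0" unfolding \<Delta>_def \<alpha>_def by (simp add: algebra_simps)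
    also have "\<dots> = h * (\<beta> h - \<beta> 0)" using \<tau>(3) unfolding \<beta>_def by (simp add: algebra_simps)
    finally have "\<Delta> = h * (h * Dfb (x + \<sigma> *\<^sub>R a + \<tau> *\<^sub>R b) a)" using \<sigma> by simp
    then show ?thesis using that cB[of \<sigma> \<tau>] \<sigma> \<tau> by auto
  qed
  have "Dfa p1 b = Dfb p2 a" using p1(1) p2(1) h by simp
  moreover have "\<And>P A B Q :: real. \<bar>P - A\<bar> < \<bar>A - B\<bar> / 2 \<Longrightarrow> \<bar>Q - B\<bar> < \<bar>A - B\<bar> / 2 \<Longrightarrow> P = Q \<Longrightarrow> False"
  proof -
    fix P A B Q :: real
    assume a: "\<bar>P - A\<bar> < \<bar>A - B\<bar> / 2" "\<bar>Q - B\<bar> < \<bar>A - B\<bar> / 2" "P = Q"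
    have "\<bar>A - B\<bar> = \<bar>(P - B) - (P - A)\<bar>" by simp
    also have "\<dots> \<le> \<bar>P - B\<bar> + \<bar>P - A\<bar>" by (rule abs_triangle_ineq4)
    finally show False using a by simp
  qed
  ultimately show False using p1(2) p2(2) unfolding e_def by blast
qed


lemma iter_swap:
  fixes f :: "'a::euclidean_space \<Rightarrow> real"
  assumes sm: "smooth_on S f" and S: "open S" "x \<in> S"
  shows "iter_dderiv f (a#b#vs) x = iter_dderiv f (b#a#vs) x"
proof -
  have "(\<lambda>z u. iter_dderiv f (u#a#vs) z) x b = (\<lambda>z u. iter_dderiv f (u#b#vs) z) x a"
    by (rule schwarz_gen[where f="iter_dderiv f vs" and Df="\<lambda>z u. iter_dderiv f (u#vs) z" and S=S
        and Dfa = "\<lambda>z u. iter_dderiv f (u#a#vs) z" and Dfb = "\<lambda>z u. iter_dderiv f (u#b#vs) z"])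
       (rule S, rule S, erule smooth_deriv[OF sm], erule smooth_deriv[OF sm], erule smooth_deriv[OF sm],
        rule smooth_cont_at[OF sm S(2)], rule smooth_cont_at[OF sm S(2)])
  then show ?thesis by simp
qed

lemma iter_swap1:
  fixes f :: "'a::euclidean_space \<Rightarrow> real"
  assumes sm: "smooth_on S f" and S: "open S" "x \<in> S"
  shows "iter_dderiv f (c#a#b#vs) x = iter_dderiv f (c#b#a#vs) x"
proof -
  have "frechet_derivative (iter_dderiv f (a#b#vs)) (at x) = (\<lambda>u. iter_dderiv f (u#b#a#vs) x)"
    by (rule deriv_eq[OF smooth_deriv[OF sm S(2)] S]) (rule iter_swap[OF sm S(1)], simp)
  then show ?thesis by (simp add: iter_dderiv.simps)
qed

lemma chain1:
  fixes f :: "'a::euclidean_space \<Rightarrow> real" and g :: "'b::real_normed_vector \<Rightarrow> 'a"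
  assumes sm: "smooth_on S f" and gx: "g x \<in> S" and dg: "(g has_derivative G) (at x)"
  shows "((\<lambda>z. iter_dderiv f vs (g z)) has_derivative (\<lambda>d. iter_dderiv f (G d # vs) (g x))) (at x)"
  using has_derivative_compose[OF dg smooth_deriv[OF sm gx]] .

lemma chain2:
  fixes f :: "'a::euclidean_space \<Rightarrow> real" and g :: "'b::real_normed_vector \<Rightarrow> 'a"
  assumes sm: "smooth_on UNIV f" and dg: "(g has_derivative G) (at x)" and du: "(u has_derivative Du) (at x)"
  shows "((\<lambda>z. iter_dderiv f (u z # vs) (g z)) has_derivative
     (\<lambda>d. iter_dderiv f (G d # u x # vs) (g x) + iter_dderiv f (Du d # vs) (g x))) (at x)"
proof -
  have e1: "(\<lambda>z. iter_dderiv f (u z # vs) (g z)) = (\<lambda>z. \<Sum>b\<in>Basis. (u z \<bullet> b) * iter_dderiv f (b # vs) (g z))"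
    by (rule ext) (rule lin_head[OF sm open_UNIV UNIV_I])
  have d: "((\<lambda>z. \<Sum>b\<in>Basis. (u z \<bullet> b) * iter_dderiv f (b # vs) (g z)) has_derivative
     (\<lambda>d. \<Sum>b\<in>Basis. (u x \<bullet> b) * iter_dderiv f (G d # b # vs) (g x) + (Du d \<bullet> b) * iter_dderiv f (b # vs) (g x))) (at x)"
    by (intro has_derivative_sum has_derivative_mult has_derivative_inner_left du chain1[OF sm _ dg]) auto
  have e2: "(\<lambda>d. \<Sum>b\<in>Basis. (u x \<bullet> b) * iter_dderiv f (G d # b # vs) (g x) + (Du d \<bullet> b) * iter_dderiv f (b # vs) (g x))
     = (\<lambda>d. iter_dderiv f (G d # u x # vs) (g x) + iter_dderiv f (Du d # vs) (g x))"
  proof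
    fix d
    show "(\<Sum>b\<in>Basis. (u x \<bullet> b) * iter_dderiv f (G d # b # vs) (g x) + (Du d \<bullet> b) * iter_dderiv f (b # vs) (g x))
      = iter_dderiv f (G d # u x # vs) (g x) + iter_dderiv f (Du d # vs) (g x)"
      using lin_depth[OF sm open_UNIV, of "g x" "[G d]" "u x" vs] lin_depth[OF sm open_UNIV, of "g x" "[]" "Du d" vs]
      by (simp add: sum.distrib)
  qed
  show ?thesis using d unfolding e1 e2 .
qed

lemma chain3:
  fixes f :: "'a::euclidean_space \<Rightarrow> real" and g :: "'b::real_normed_vector \<Rightarrow> 'a"
  assumes sm: "smooth_on UNIV f" and dg: "(g has_derivative G) (at x)"
    and du1: "(u1 has_derivative Du1) (at x)" and du2: "(u2 has_derivative Du2) (at x)"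
  shows "((\<lambda>z. iter_dderiv f (u1 z # u2 z # vs) (g z)) has_derivative
     (\<lambda>d. iter_dderiv f (G d # u1 x # u2 x # vs) (g x) + iter_dderiv f (Du1 d # u2 x # vs) (g x)
        + iter_dderiv f (u1 x # Du2 d # vs) (g x))) (at x)"
proof -
  have e1: "(\<lambda>z. iter_dderiv f (u1 z # u2 z # vs) (g z)) = (\<lambda>z. \<Sum>b\<in>Basis. (u2 z \<bullet> b) * iter_dderiv f (u1 z # b # vs) (g z))"
    by (rule ext) (rule lin_2[OF sm open_UNIV UNIV_I])
  have d: "((\<lambda>z. \<Sum>b\<in>Basis. (u2 z \<bullet> b) * iter_dderiv f (u1 z # b # vs) (g z)) has_derivative
     (\<lambda>d. \<Sum>b\<in>Basis. (u2 x \<bullet> b) * (iter_dderiv f (G d # u1 x # b # vs) (g x) + iter_dderiv f (Du1 d # b # vs) (g x))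
        + (Du2 d \<bullet> b) * iter_dderiv f (u1 x # b # vs) (g x))) (at x)"
    by (intro has_derivative_sum has_derivative_mult has_derivative_inner_left du2 chain2[OF sm dg du1])
  have e2: "(\<lambda>d. \<Sum>b\<in>Basis. (u2 x \<bullet> b) * (iter_dderiv f (G d # u1 x # b # vs) (g x) + iter_dderiv f (Du1 d # b # vs) (g x))
        + (Du2 d \<bullet> b) * iter_dderiv f (u1 x # b # vs) (g x))
     = (\<lambda>d. iter_dderiv f (G d # u1 x # u2 x # vs) (g x) + iter_dderiv f (Du1 d # u2 x # vs) (g x)
        + iter_dderiv f (u1 x # Du2 d # vs) (g x))"
  proof
    fix d
    show "(\<Sum>b\<in>Basis. (u2 x \<bullet> b) * (iter_dderiv f (G d # u1 x # b # vs) (g x) + iter_dderiv f (Du1 d # b # vs) (g x))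
        + (Du2 d \<bullet> b) * iter_dderiv f (u1 x # b # vs) (g x))
     = iter_dderiv f (G d # u1 x # u2 x # vs) (g x) + iter_dderiv f (Du1 d # u2 x # vs) (g x)
        + iter_dderiv f (u1 x # Du2 d # vs) (g x)"
      using lin_depth[OF sm open_UNIV, of "g x" "[G d, u1 x]" "u2 x" vs] lin_depth[OF sm open_UNIV, of "g x" "[Du1 d]" "u2 x" vs]
        lin_depth[OF sm open_UNIV, of "g x" "[u1 x]" "Du2 d" vs]
      by (simp add: sum.distrib distrib_left)
  qed
  show ?thesis using d unfolding e1 e2 .
qed


lemma chain1r:
  fixes f :: "'a::euclidean_space \<Rightarrow> real" and g :: "real \<Rightarrow> 'a"
  assumes sm: "smooth_on S f" and S: "open S" and gx: "g t \<in> S" and dg: "(g has_vector_derivative g') (at t)"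
  shows "((\<lambda>s. iter_dderiv f vs (g s)) has_real_derivative iter_dderiv f (g' # vs) (g t)) (at t)"
proof -
  have "((\<lambda>s. iter_dderiv f vs (g s)) has_derivative (\<lambda>d. iter_dderiv f ((d *\<^sub>R g') # vs) (g t))) (at t)"
    by (rule chain1[OF sm gx dg[unfolded has_vector_derivative_def]])
  moreover have "(\<lambda>d. iter_dderiv f ((d *\<^sub>R g') # vs) (g t)) = (*) (iter_dderiv f (g' # vs) (g t))"
    using lin_scale[OF sm S gx, where ws="[]"] by (auto simp: mult.commute)
  ultimately show ?thesis by (simp add: has_field_derivative_def)
qed

lemma chain2r:
  fixes f :: "'a::euclidean_space \<Rightarrow> real" and g :: "real \<Rightarrow> 'a"
  assumes sm: "smooth_on UNIV f" and dg: "(g has_vector_derivative g') (at t)"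
    and du: "(u has_vector_derivative u') (at t)"
  shows "((\<lambda>s. iter_dderiv f (u s # vs) (g s)) has_real_derivative
      iter_dderiv f (g' # u t # vs) (g t) + iter_dderiv f (u' # vs) (g t)) (at t)"
proof -
  have "((\<lambda>s. iter_dderiv f (u s # vs) (g s)) has_derivative
     (\<lambda>d. iter_dderiv f ((d *\<^sub>R g') # u t # vs) (g t) + iter_dderiv f ((d *\<^sub>R u') # vs) (g t))) (at t)"
    by (rule chain2[OF sm dg[unfolded has_vector_derivative_def] du[unfolded has_vector_derivative_def]])
  moreover have "(\<lambda>d. iter_dderiv f ((d *\<^sub>R g') # u t # vs) (g t) + iter_dderiv f ((d *\<^sub>R u') # vs) (g t))
      = (*) (iter_dderiv f (g' # u t # vs) (g t) + iter_dderiv f (u' # vs) (g t))"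
    using lin_scale[OF sm open_UNIV UNIV_I, where ws="[]"] by (auto simp: algebra_simps)
  ultimately show ?thesis by (simp add: has_field_derivative_def)
qed

lemma chain3r:
  fixes f :: "'a::euclidean_space \<Rightarrow> real" and g :: "real \<Rightarrow> 'a"
  assumes sm: "smooth_on UNIV f" and dg: "(g has_vector_derivative g') (at t)"
    and du1: "(u1 has_vector_derivative u1') (at t)" and du2: "(u2 has_vector_derivative u2') (at t)"
  shows "((\<lambda>s. iter_dderiv f (u1 s # u2 s # vs) (g s)) has_real_derivative
      iter_dderiv f (g' # u1 t # u2 t # vs) (g t) + iter_dderiv f (u1' # u2 t # vs) (g t)
      + iter_dderiv f (u1 t # u2' # vs) (g t)) (at t)"
proof -
  have "((\<lambda>s. iter_dderiv f (u1 s # u2 s # vs) (g s)) has_derivative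
     (\<lambda>d. iter_dderiv f ((d *\<^sub>R g') # u1 t # u2 t # vs) (g t) + iter_dderiv f ((d *\<^sub>R u1') # u2 t # vs) (g t)
      + iter_dderiv f (u1 t # (d *\<^sub>R u2') # vs) (g t))) (at t)"
    by (rule chain3[OF sm dg[unfolded has_vector_derivative_def] du1[unfolded has_vector_derivative_def]
          du2[unfolded has_vector_derivative_def]])
  moreover have "(\<lambda>d. iter_dderiv f ((d *\<^sub>R g') # u1 t # u2 t # vs) (g t) + iter_dderiv f ((d *\<^sub>R u1') # u2 t # vs) (g t)
      + iter_dderiv f (u1 t # (d *\<^sub>R u2') # vs) (g t))
      = (*) (iter_dderiv f (g' # u1 t # u2 t # vs) (g t) + iter_dderiv f (u1' # u2 t # vs) (g t)
      + iter_dderiv f (u1 t # u2' # vs) (g t))"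
    using lin_scale[OF sm open_UNIV UNIV_I, where ws="[]"] lin_scale[OF sm open_UNIV UNIV_I, where ws="[u1 t]"]
    by (auto simp: algebra_simps)
  ultimately show ?thesis by (simp add: has_field_derivative_def)
qed

lemma Jinv_linear: "linear Jinv"
  by (rule linearI) (auto simp: Jinv_def)

lemma Jinv_skew: "Jinv x \<bullet> y = - (Jinv y \<bullet> x)"
  by (simp add: Jinv_def inner_prod_def inner_commute)

lemma skew:
  fixes \<alpha> \<beta> :: "((real^'n) \<times> (real^'n)) \<Rightarrow> real"
  assumes "linear \<alpha>" "linear \<beta>"
  shows "\<alpha> (\<Sum>b\<in>Basis. \<beta> b *\<^sub>R Jinv b) = - \<beta> (\<Sum>b\<in>Basis. \<alpha> b *\<^sub>R Jinv b)"
proof -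
  have "\<alpha> (\<Sum>b\<in>Basis. \<beta> b *\<^sub>R Jinv b) = (\<Sum>b\<in>Basis. \<beta> b * \<alpha> (Jinv b))"
    using assms(1) by (simp add: linear_sum linear_scale o_def)
  also have "\<dots> = (\<Sum>b\<in>Basis. \<Sum>c\<in>Basis. \<beta> b * ((Jinv b \<bullet> c) * \<alpha> c))"
    using lin_expand[OF assms(1), of "Jinv b" for b] by (simp add: sum_distrib_left)
  also have "\<dots> = (\<Sum>c\<in>Basis. \<Sum>b\<in>Basis. \<beta> b * ((Jinv b \<bullet> c) * \<alpha> c))"
    by (rule sum.swap)
  also have "\<dots> = - (\<Sum>c\<in>Basis. \<Sum>b\<in>Basis. \<alpha> c * ((Jinv c \<bullet> b) * \<beta> b))"
  proof -
    have "\<And>b c. \<beta> b * ((Jinv b \<bullet> c) * \<alpha> c) = - (\<alpha> c * ((Jinv c \<bullet> b) * \<beta> b))"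
      subgoal for b c using Jinv_skew[of b c] by simp
      done
    then show ?thesis by (simp add: sum_negf)
  qed
  also have "(\<Sum>c\<in>Basis. \<Sum>b\<in>Basis. \<alpha> c * ((Jinv c \<bullet> b) * \<beta> b)) = (\<Sum>c\<in>Basis. \<alpha> c * \<beta> (Jinv c))"
    using lin_expand[OF assms(2), of "Jinv c" for c] by (simp add: sum_distrib_left)
  also have "\<dots> = \<beta> (\<Sum>c\<in>Basis. \<alpha> c *\<^sub>R Jinv c)"
    using assms(2) by (simp add: linear_sum linear_scale o_def)
  finally show ?thesis .
qed


lemma linear_head:
  assumes "smooth_on S f" "x \<in> S"
  shows "linear (\<lambda>u. iter_dderiv f (u#vs) x)"
  using smooth_deriv[OF assms] has_derivative_linear by blast

lemma deriv_link:
  fixes p a r :: "real \<Rightarrow> real"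
  assumes U: "open U" "t \<in> U" and eq: "\<And>s. s \<in> U \<Longrightarrow> p s = c * a s + s * r s"
    and dp: "(p has_real_derivative P) (at t)" and da: "(a has_real_derivative A) (at t)"
    and dr: "(r has_real_derivative R) (at t)"
  shows "P = c * A + r t + t * R"
proof -
  have "((\<lambda>s. c * a s + s * r s) has_real_derivative c * A + (1 * r t + R * t)) (at t)"
    by (intro DERIV_add DERIV_cmult DERIV_mult DERIV_ident da dr)
  then have "(p has_real_derivative c * A + (1 * r t + R * t)) (at t)"
    by (rule has_field_derivative_transform_within_open[OF _ U]) (simp add: eq)
  from DERIV_unique[OF dp this] show ?thesis by (simp add: algebra_simps)
qed

lemma vd_scale:
  assumes "(c has_real_derivative c') (at t)"
  shows "((\<lambda>s. c s *\<^sub>R J) has_vector_derivative c' *\<^sub>R J) (at t)"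
proof -
  have "((\<lambda>s. c s *\<^sub>R J) has_derivative (\<lambda>x. (c' * x) *\<^sub>R J)) (at t)"
    using has_derivative_scaleR_left[OF assms[unfolded has_field_derivative_def]] .
  then show ?thesis unfolding has_vector_derivative_def by (simp add: mult.commute)
qed

locale hsetup =
  fixes H :: "((real^'n) \<times> (real^'n)) \<Rightarrow> real"
    and Hh :: "((real^'n) \<times> (real^'n)) \<times> real \<Rightarrow> real"
    and V :: "((real^'n) \<times> (real^'n)) set"
    and U :: "real set"
  assumes H_smooth: "smooth_on UNIV H"
    and V_open: "open V" and U_open: "open U" and U0: "0 \<in> U"
    and Hh_smooth: "smooth_on (V \<times> U) Hh"
    and PDE: "\<And>y t. y \<in> V \<Longrightarrow> t \<in> U \<Longrightarrow>
       ((\<lambda>s. s * Hh (y, s)) has_real_derivative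
          H (y + (t / 2) *\<^sub>R Jinv (grad (\<lambda>z. Hh (z, t)) y))) (at t)"
begin

lemma VU_open: "open (V \<times> U)" using V_open U_open by (rule open_Times)

lemma H_V: "smooth_on V H" using H_smooth unfolding smooth_on_def by blast

lemma dy:
  assumes "z \<in> V" "t \<in> U"
  shows "((\<lambda>z. iter_dderiv Hh vs (z,t)) has_derivative (\<lambda>u. iter_dderiv Hh ((u,0)#vs) (z,t))) (at z)"
proof -
  have "((\<lambda>z. (z,t)) has_derivative (\<lambda>u. (u,0))) (at z)"
    by (rule has_derivative_Pair[OF has_derivative_ident has_derivative_const])
  from chain1[OF Hh_smooth _ this] assms show ?thesis by auto
qed

lemma dt:
  assumes "z \<in> V" "s \<in> U"
  shows "((\<lambda>s. iter_dderiv Hh vs (z,s)) has_real_derivative iter_dderiv Hh ((0,1)#vs) (z,s)) (at s)"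
proof -
  have "((\<lambda>s. (z,s)) has_derivative (\<lambda>d. (0,d))) (at s)"
    by (rule has_derivative_Pair[OF has_derivative_const has_derivative_ident])
  then have "((\<lambda>s. (z,s)) has_vector_derivative (0,1)) (at s)"
    unfolding has_vector_derivative_def by (simp add: has_derivative_eq_rhs)
  from chain1r[OF Hh_smooth VU_open _ this] assms show ?thesis by auto
qed

lemma dt0:
  assumes "z \<in> V" "s \<in> U"
  shows "((\<lambda>s. Hh (z,s)) has_real_derivative iter_dderiv Hh [(0,1)] (z,s)) (at s)"
  using dt[OF assms, of "[]"] by simp

lemma frechet_Hh:
  assumes "z \<in> V" "t \<in> U"
  shows "frechet_derivative (\<lambda>z. Hh (z,t)) (at z) = (\<lambda>u. iter_dderiv Hh [(u,0)] (z,t))"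
  using frechet_derivative_at[OF dy[OF assms, of "[]"]] by simp

lemma grad_Hh:
  assumes "z \<in> V" "t \<in> U"
  shows "grad (\<lambda>z. Hh (z,t)) z = (\<Sum>b\<in>Basis. iter_dderiv Hh [(b,0)] (z,t) *\<^sub>R b)"
  unfolding grad_def frechet_Hh[OF assms] ..

lemma hess_Hh:
  assumes "z \<in> V" "t \<in> U"
  shows "hess_form (\<lambda>z. Hh (z,t)) z v = iter_dderiv Hh [(v,0),(v,0)] (z,t)"
proof -
  have "frechet_derivative (\<lambda>z'. frechet_derivative (\<lambda>z. Hh (z, t)) (at z') v) (at z)
      = (\<lambda>u. iter_dderiv Hh [(u,0),(v,0)] (z,t))"
    by (rule deriv_eq[OF dy[OF assms, of "[(v,0)]"] V_open assms(1)]) (simp add: frechet_Hh assms)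
  then show ?thesis unfolding hess_form_def by simp
qed

lemma slice1:
  assumes t0: "t0 \<in> U" and z: "z \<in> V" and eq: "\<And>z'. z' \<in> V \<Longrightarrow> iter_dderiv Hh ws (z',t0) = g z'"
    and dg: "(g has_derivative G) (at z)"
  shows "iter_dderiv Hh ((u,0)#ws) (z,t0) = G u"
proof -
  have "(g has_derivative (\<lambda>u. iter_dderiv Hh ((u,0)#ws) (z,t0))) (at z)"
    by (rule has_derivative_transform_within_open[OF dy[OF z t0] V_open z]) (simp add: eq)
  from has_derivative_unique[OF this dg] show ?thesis by metis
qed

lemma slice:
  assumes sg: "smooth_on V g" and t0: "t0 \<in> U" and eq: "\<And>z'. z' \<in> V \<Longrightarrow> iter_dderiv Hh ws (z',t0) = g z'"
  shows "z \<in> V \<Longrightarrow> iter_dderiv Hh (map (\<lambda>u. (u,0)) us @ ws) (z,t0) = iter_dderiv g us z"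
proof (induction us arbitrary: z)
  case Nil
  then show ?case using eq by simp
next
  case (Cons u us)
  have "iter_dderiv Hh ((u,0) # (map (\<lambda>u. (u,0)) us @ ws)) (z,t0) = iter_dderiv g (u#us) z"
    by (rule slice1[OF t0 Cons.prems Cons.IH smooth_deriv[OF sg Cons.prems]])
  then show ?case by simp
qed

lemma pde_eq:
  assumes "y \<in> V" "t \<in> U"
  shows "H (y + (t / 2) *\<^sub>R Jinv (grad (\<lambda>z. Hh (z, t)) y)) = Hh (y,t) + t * iter_dderiv Hh [(0,1)] (y,t)"
proof -
  have "((\<lambda>s. s * Hh (y,s)) has_real_derivative 1 * Hh (y,t) + iter_dderiv Hh [(0,1)] (y,t) * t) (at t)"
    by (intro DERIV_mult DERIV_ident dt0 assms)
  from DERIV_unique[OF PDE[OF assms] this] show ?thesis by simp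
qed

lemma H0: "y \<in> V \<Longrightarrow> Hh (y,0) = H y"
  using pde_eq[of y 0] U0 by simp

definition "vv y = (\<Sum>b\<in>Basis. iter_dderiv H [b] y *\<^sub>R Jinv b)"
definition "Jc k y t = (\<Sum>b\<in>Basis. iter_dderiv Hh (replicate k (0,1) @ [(b,0)]) (y,t) *\<^sub>R Jinv b)"
definition "gam y t = y + (t/2) *\<^sub>R Jc 0 y t"
definition "gam1 y t = (1/2) *\<^sub>R Jc 0 y t + (t/2) *\<^sub>R Jc 1 y t"
definition "gam2 y t = Jc 1 y t + (t/2) *\<^sub>R Jc 2 y t"
definition "gam3 y t = (3/2) *\<^sub>R Jc 2 y t + (t/2) *\<^sub>R Jc 3 y t"
definition "phi k y t = iter_dderiv Hh (replicate k (0,1)) (y,t)"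

lemma Jinv_grad:
  assumes "y \<in> V" "t \<in> U"
  shows "Jinv (grad (\<lambda>z. Hh (z, t)) y) = Jc 0 y t"
  unfolding grad_Hh[OF assms] Jc_def by (simp add: linear_sum[OF Jinv_linear] linear_scale[OF Jinv_linear] o_def)

lemma Jc_deriv:
  assumes "y \<in> V" "t \<in> U"
  shows "(Jc k y has_vector_derivative Jc (Suc k) y t) (at t)"
proof -
  have "((\<lambda>t. \<Sum>b\<in>Basis. iter_dderiv Hh (replicate k (0,1) @ [(b,0)]) (y,t) *\<^sub>R Jinv b) has_vector_derivative
      (\<Sum>b\<in>Basis. iter_dderiv Hh ((0,1) # replicate k (0,1) @ [(b,0)]) (y,t) *\<^sub>R Jinv b)) (at t)"
    by (intro has_vector_derivative_sum vd_scale dt assms)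
  then show ?thesis unfolding Jc_def[abs_def] by simp
qed

lemma Jc01: "y \<in> V \<Longrightarrow> t \<in> U \<Longrightarrow> (Jc 0 y has_vector_derivative Jc 1 y t) (at t)"
  using Jc_deriv[of y t 0] by simp
lemma Jc12: "y \<in> V \<Longrightarrow> t \<in> U \<Longrightarrow> (Jc 1 y has_vector_derivative Jc 2 y t) (at t)"
  using Jc_deriv[of y t 1] by (simp add: numeral_2_eq_2)
lemma Jc23: "y \<in> V \<Longrightarrow> t \<in> U \<Longrightarrow> (Jc 2 y has_vector_derivative Jc 3 y t) (at t)"
  using Jc_deriv[of y t 2] by (simp add: numeral_3_eq_3 numeral_2_eq_2)

lemma phi_deriv:
  assumes "y \<in> V" "t \<in> U"
  shows "(phi k y has_real_derivative phi (Suc k) y t) (at t)"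
  unfolding phi_def using dt[OF assms, of "replicate k (0,1)"] by simp

lemma gam_deriv:
  assumes "y \<in> V" "t \<in> U"
  shows "(gam y has_vector_derivative gam1 y t) (at t)"
proof -
  have "((\<lambda>t. y + (t/2) *\<^sub>R Jc 0 y t) has_vector_derivative 0 + ((t/2) *\<^sub>R Jc 1 y t + (1/2) *\<^sub>R Jc 0 y t)) (at t)"
    by (intro has_vector_derivative_add has_vector_derivative_const has_vector_derivative_scaleR Jc01 Jc12 Jc23 assms
        derivative_eq_intros) auto
  then show ?thesis unfolding gam_def[abs_def] gam1_def by (simp add: algebra_simps)
qed

lemma gam1_deriv:
  assumes "y \<in> V" "t \<in> U"
  shows "(gam1 y has_vector_derivative gam2 y t) (at t)"
proof -
  have d: "((\<lambda>t. (1/2) *\<^sub>R Jc 0 y t + (t/2) *\<^sub>R Jc 1 y t) has_vector_derivative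
      ((1/2) *\<^sub>R Jc 1 y t + 0 *\<^sub>R Jc 0 y t) + ((t/2) *\<^sub>R Jc 2 y t + (1/2) *\<^sub>R Jc 1 y t)) (at t)"
    by (intro has_vector_derivative_add has_vector_derivative_scaleR Jc01 Jc12 Jc23 assms
        derivative_eq_intros) auto
  have e: "((1/2) *\<^sub>R Jc 1 y t + 0 *\<^sub>R Jc 0 y t) + ((t/2) *\<^sub>R Jc 2 y t + (1/2) *\<^sub>R Jc 1 y t)
     = Jc 1 y t + (t/2) *\<^sub>R Jc 2 y t"
  proof -
    have "(1/2) *\<^sub>R Jc 1 y t + (1/2) *\<^sub>R Jc 1 y t = Jc 1 y t"
      using scaleR_add_left[of "1/2" "1/2" "Jc 1 y t"] by simp
    moreover have "((1/2) *\<^sub>R Jc 1 y t + 0 *\<^sub>R Jc 0 y t) + ((t/2) *\<^sub>R Jc 2 y t + (1/2) *\<^sub>R Jc 1 y t)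
      = ((1/2) *\<^sub>R Jc 1 y t + (1/2) *\<^sub>R Jc 1 y t) + (t/2) *\<^sub>R Jc 2 y t"
      by (simp only: scaleR_zero_left add_0_right add_0_left add_ac)
    ultimately show ?thesis by (simp only:)
  qed
  show ?thesis unfolding gam1_def[abs_def] gam2_def using d[unfolded e] .
qed

lemma gam2_deriv:
  assumes "y \<in> V" "t \<in> U"
  shows "(gam2 y has_vector_derivative gam3 y t) (at t)"
proof -
  have d: "((\<lambda>t. Jc 1 y t + (t/2) *\<^sub>R Jc 2 y t) has_vector_derivative
      Jc 2 y t + ((t/2) *\<^sub>R Jc 3 y t + (1/2) *\<^sub>R Jc 2 y t)) (at t)"
    by (intro has_vector_derivative_add has_vector_derivative_scaleR Jc01 Jc12 Jc23 assms
        derivative_eq_intros) auto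
  have e: "Jc 2 y t + ((t/2) *\<^sub>R Jc 3 y t + (1/2) *\<^sub>R Jc 2 y t)
     = (3/2) *\<^sub>R Jc 2 y t + (t/2) *\<^sub>R Jc 3 y t"
  proof -
    have "Jc 2 y t + (1/2) *\<^sub>R Jc 2 y t = (3/2) *\<^sub>R Jc 2 y t"
      using scaleR_add_left[of 1 "1/2" "Jc 2 y t"] by simp
    moreover have "Jc 2 y t + ((t/2) *\<^sub>R Jc 3 y t + (1/2) *\<^sub>R Jc 2 y t)
      = (Jc 2 y t + (1/2) *\<^sub>R Jc 2 y t) + (t/2) *\<^sub>R Jc 3 y t"
      by (simp only: add_ac)
    ultimately show ?thesis by (simp only:)
  qed
  show ?thesis unfolding gam2_def[abs_def] gam3_def using d[unfolded e] .
qed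

lemma P01: "y \<in> V \<Longrightarrow> t \<in> U \<Longrightarrow> (phi 0 y has_real_derivative phi 1 y t) (at t)"
  using phi_deriv[of y t 0] by simp
lemma P12: "y \<in> V \<Longrightarrow> t \<in> U \<Longrightarrow> (phi 1 y has_real_derivative phi 2 y t) (at t)"
  using phi_deriv[of y t 1] by (simp add: numeral_2_eq_2)
lemma P23: "y \<in> V \<Longrightarrow> t \<in> U \<Longrightarrow> (phi 2 y has_real_derivative phi 3 y t) (at t)"
  using phi_deriv[of y t 2] by (simp add: numeral_3_eq_3 numeral_2_eq_2)

lemma phi0: "phi 0 y t = Hh (y,t)" by (simp add: phi_def)

lemma psi_eq:
  assumes "y \<in> V" "t \<in> U"
  shows "H (gam y t) = 1 * phi 0 y t + t * phi 1 y t"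
  using pde_eq[OF assms] Jinv_grad[OF assms] by (simp add: gam_def phi_def)

lemma lev1:
  assumes "y \<in> V" "t \<in> U"
  shows "iter_dderiv H [gam1 y t] (gam y t) = 2 * phi 1 y t + t * phi 2 y t"
proof -
  have dp: "((\<lambda>s. H (gam y s)) has_real_derivative iter_dderiv H [gam1 y t] (gam y t)) (at t)"
    using chain1r[OF H_smooth open_UNIV UNIV_I gam_deriv[OF assms], of "[]"] by simp
  have "iter_dderiv H [gam1 y t] (gam y t) = 1 * phi 1 y t + phi 1 y t + t * phi 2 y t"
    by (rule deriv_link[OF U_open assms(2) psi_eq[OF assms(1)] dp P01[OF assms] P12[OF assms]])
  then show ?thesis by simp
qed

lemma lev2:
  assumes "y \<in> V" "t \<in> U"
  shows "iter_dderiv H [gam1 y t, gam1 y t] (gam y t) + iter_dderiv H [gam2 y t] (gam y t)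
     = 3 * phi 2 y t + t * phi 3 y t"
proof -
  have dp: "((\<lambda>s. iter_dderiv H [gam1 y s] (gam y s)) has_real_derivative
      iter_dderiv H [gam1 y t, gam1 y t] (gam y t) + iter_dderiv H [gam2 y t] (gam y t)) (at t)"
    using chain2r[OF H_smooth gam_deriv[OF assms] gam1_deriv[OF assms], of "[]"] by simp
  have "iter_dderiv H [gam1 y t, gam1 y t] (gam y t) + iter_dderiv H [gam2 y t] (gam y t)
     = 2 * phi 2 y t + phi 2 y t + t * phi 3 y t"
    by (rule deriv_link[OF U_open assms(2) lev1[OF assms(1)] dp P12[OF assms] P23[OF assms]])
  then show ?thesis by simp
qed

lemma lev3:
  assumes y: "y \<in> V"
  shows "iter_dderiv H [gam1 y 0, gam1 y 0, gam1 y 0] (gam y 0) + iter_dderiv H [gam2 y 0, gam1 y 0] (gam y 0)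
      + iter_dderiv H [gam1 y 0, gam2 y 0] (gam y 0)
      + (iter_dderiv H [gam1 y 0, gam2 y 0] (gam y 0) + iter_dderiv H [gam3 y 0] (gam y 0))
      = 4 * phi 3 y 0"
proof -
  have dp: "((\<lambda>s. iter_dderiv H [gam1 y s, gam1 y s] (gam y s) + iter_dderiv H [gam2 y s] (gam y s)) has_real_derivative
      iter_dderiv H [gam1 y 0, gam1 y 0, gam1 y 0] (gam y 0) + iter_dderiv H [gam2 y 0, gam1 y 0] (gam y 0)
      + iter_dderiv H [gam1 y 0, gam2 y 0] (gam y 0)
      + (iter_dderiv H [gam1 y 0, gam2 y 0] (gam y 0) + iter_dderiv H [gam3 y 0] (gam y 0))) (at 0)"
    by (intro DERIV_add chain3r[OF H_smooth gam_deriv[OF y U0] gam1_deriv[OF y U0] gam1_deriv[OF y U0], of "[]"]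
         chain2r[OF H_smooth gam_deriv[OF y U0] gam2_deriv[OF y U0], of "[]"])
  have "iter_dderiv H [gam1 y 0, gam1 y 0, gam1 y 0] (gam y 0) + iter_dderiv H [gam2 y 0, gam1 y 0] (gam y 0)
      + iter_dderiv H [gam1 y 0, gam2 y 0] (gam y 0)
      + (iter_dderiv H [gam1 y 0, gam2 y 0] (gam y 0) + iter_dderiv H [gam3 y 0] (gam y 0))
      = 3 * phi 3 y 0 + phi 3 y 0 + 0 * phi 4 y 0"
    by (rule deriv_link[OF U_open U0 lev2[OF y] dp P23[OF y U0] phi_deriv[OF y U0, of 3, simplified]])
  then show ?thesis by simp
qed

lemma Jc0: assumes y: "y \<in> V" shows "Jc 0 y 0 = vv y"
proof -
  have "iter_dderiv Hh (map (\<lambda>u. (u,0)) [b] @ []) (y,0) = iter_dderiv H [b] y" for b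
    by (rule slice[OF H_V U0 _ y]) (simp add: H0)
  then show ?thesis unfolding Jc_def vv_def by simp
qed

lemma linH: "linear (\<lambda>u. iter_dderiv H (u#vs) x)"
  by (rule linear_head[OF H_smooth UNIV_I])

lemma vv_zero: "iter_dderiv H [vv y] y = 0"
proof -
  have "iter_dderiv H [vv y] y = - iter_dderiv H [vv y] y"
    using skew[OF linH[of "[]" y] linH[of "[]" y]] unfolding vv_def by simp
  then show ?thesis by simp
qed

lemma E: assumes y: "y \<in> V" shows "phi 1 y 0 = 0"
proof -
  have "iter_dderiv H [gam1 y 0] (gam y 0) = 2 * phi 1 y 0" using lev1[OF y U0] by simp
  moreover have "gam y 0 = y" "gam1 y 0 = (1/2) *\<^sub>R vv y" using Jc0[OF y] by (simp_all add: gam_def gam1_def)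
  moreover have "iter_dderiv H [(1/2) *\<^sub>R vv y] y = (1/2) * iter_dderiv H [vv y] y"
    using lin_scale[OF H_smooth open_UNIV UNIV_I, where ws="[]"] by simp
  ultimately show ?thesis using vv_zero by simp
qed

lemma Jc1zero: assumes y: "y \<in> V" shows "Jc 1 y 0 = 0"
proof -
  have "iter_dderiv Hh [(0,1),(b,0)] (y,0) = 0" for b
  proof -
    have "iter_dderiv Hh [(0,1),(b,0)] (y,0) = iter_dderiv Hh [(b,0),(0,1)] (y,0)"
      using iter_swap[OF Hh_smooth VU_open, of "(y,0)"] y U0 by simp
    also have "\<dots> = (\<lambda>_. 0) b"
      by (rule slice1[OF U0 y _ has_derivative_const]) (use E in \<open>simp add: phi_def\<close>)
    finally show ?thesis by simp
  qed
  then show ?thesis unfolding Jc_def by simp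
qed

lemma F: assumes y: "y \<in> V" shows "phi 2 y 0 = (1/12) * iter_dderiv H [vv y, vv y] y"
proof -
  have g: "gam y 0 = y" "gam1 y 0 = (1/2) *\<^sub>R vv y" "gam2 y 0 = 0"
    using Jc0[OF y] Jc1zero[OF y] by (simp_all add: gam_def gam1_def gam2_def)
  have "iter_dderiv H [gam1 y 0, gam1 y 0] (gam y 0) + iter_dderiv H [gam2 y 0] (gam y 0) = 3 * phi 2 y 0"
    using lev2[OF y U0] by simp
  moreover have "iter_dderiv H [gam2 y 0] (gam y 0) = 0"
    unfolding g using lin_zero[OF H_smooth open_UNIV UNIV_I, where ws="[]"] by simp
  moreover have "iter_dderiv H [(1/2) *\<^sub>R vv y, (1/2) *\<^sub>R vv y] y = (1/2) * ((1/2) * iter_dderiv H [vv y, vv y] y)"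
    using lin_scale[OF H_smooth open_UNIV UNIV_I, where ws="[]"] lin_scale[OF H_smooth open_UNIV UNIV_I, where ws="[vv y]"]
    by simp
  ultimately show ?thesis unfolding g by simp
qed


definition "DV y d = (\<Sum>b\<in>Basis. iter_dderiv H [d,b] y *\<^sub>R Jinv b)"
definition "g2 z = (1/12) * iter_dderiv H [vv z, vv z] z"
definition "G2 y d = (1/12) * (iter_dderiv H [d, vv y, vv y] y + iter_dderiv H [DV y d, vv y] y
    + iter_dderiv H [vv y, DV y d] y)"

lemma vv_deriv: "(vv has_derivative DV y) (at y)"
proof -
  have "((\<lambda>z. \<Sum>b\<in>Basis. iter_dderiv H [b] z *\<^sub>R Jinv b) has_derivative
      (\<lambda>d. \<Sum>b\<in>Basis. iter_dderiv H [d,b] y *\<^sub>R Jinv b)) (at y)"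
    by (intro has_derivative_sum has_derivative_scaleR_left smooth_deriv[OF H_smooth UNIV_I])
  then show ?thesis unfolding vv_def[abs_def] DV_def[abs_def] .
qed

lemma g2_deriv: "(g2 has_derivative G2 y) (at y)"
proof -
  have "((\<lambda>z. iter_dderiv H [vv z, vv z] z) has_derivative
     (\<lambda>d. iter_dderiv H [d, vv y, vv y] y + iter_dderiv H [DV y d, vv y] y + iter_dderiv H [vv y, DV y d] y)) (at y)"
    using chain3[OF H_smooth has_derivative_ident vv_deriv vv_deriv, of "[]"] by simp
  from has_derivative_mult_right[OF this, of "1/12"] show ?thesis
    unfolding g2_def[abs_def] G2_def[abs_def] .
qed

lemma Jc2: assumes y: "y \<in> V" shows "Jc 2 y 0 = (\<Sum>b\<in>Basis. G2 y b *\<^sub>R Jinv b)"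
proof -
  have yU: "(y,0) \<in> V \<times> U" using y U0 by simp
  have "iter_dderiv Hh [(0,1),(0,1),(b,0)] (y,0) = G2 y b" for b
  proof -
    have "iter_dderiv Hh [(0,1),(0,1),(b,0)] (y,0) = iter_dderiv Hh [(0,1),(b,0),(0,1)] (y,0)"
      using iter_swap1[OF Hh_smooth VU_open yU, of "(0,1)" "(0,1)" "(b,0)" "[]"] by simp
    also have "\<dots> = iter_dderiv Hh [(b,0),(0,1),(0,1)] (y,0)"
      using iter_swap[OF Hh_smooth VU_open yU, of "(0,1)" "(b,0)" "[(0,1)]"] by simp
    also have "\<dots> = G2 y b"
    proof (rule slice1[OF U0 y _ g2_deriv])
      fix z' assume "z' \<in> V"
      then show "iter_dderiv Hh [(0,1),(0,1)] (z',0) = g2 z'"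
        using F[of z'] by (simp add: phi_def g2_def numeral_2_eq_2)
    qed
    finally show ?thesis .
  qed
  then show ?thesis unfolding Jc_def by (simp add: numeral_2_eq_2)
qed

lemma G: assumes y: "y \<in> V" shows "phi 3 y 0 = 0"
proof -
  define v where "v = vv y"
  define T where "T = iter_dderiv H [v, v, v] y"
  have g: "gam y 0 = y" "gam1 y 0 = (1/2) *\<^sub>R v" "gam2 y 0 = 0" "gam3 y 0 = (3/2) *\<^sub>R Jc 2 y 0"
    using Jc0[OF y] Jc1zero[OF y] by (simp_all add: gam_def gam1_def gam2_def gam3_def v_def)
  have z1: "iter_dderiv H [0, (1/2) *\<^sub>R v] y = 0"
    using lin_zero[OF H_smooth open_UNIV UNIV_I, where ws="[]"] by simp
  have z2: "iter_dderiv H [(1/2) *\<^sub>R v, 0] y = 0"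
    using lin_zero[OF H_smooth open_UNIV UNIV_I, where ws="[(1/2) *\<^sub>R v]"] by simp
  have t1: "iter_dderiv H [(1/2) *\<^sub>R v, (1/2) *\<^sub>R v, (1/2) *\<^sub>R v] y = (1/2) * ((1/2) * ((1/2) * T))"
    using lin_scale[OF H_smooth open_UNIV UNIV_I, where ws="[]"] lin_scale[OF H_smooth open_UNIV UNIV_I, where ws="[v]"]
      lin_scale[OF H_smooth open_UNIV UNIV_I, where ws="[v,v]"]
    by (simp add: T_def)
  have lG: "linear (G2 y)" using g2_deriv has_derivative_linear by blast
  have t3: "iter_dderiv H [(3/2) *\<^sub>R Jc 2 y 0] y = (3/2) * (- G2 y v)"
  proof -
    have "iter_dderiv H [(3/2) *\<^sub>R Jc 2 y 0] y = (3/2) * iter_dderiv H [Jc 2 y 0] y"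
      using lin_scale[OF H_smooth open_UNIV UNIV_I, where ws="[]"] by simp
    also have "iter_dderiv H [Jc 2 y 0] y = - G2 y v"
      unfolding Jc2[OF y] v_def vv_def using skew[OF linH[of "[]" y] lG] by simp
    finally show ?thesis .
  qed
  define \<beta> where "\<beta> u = iter_dderiv H [u, v] y" for u
  have lb: "linear \<beta>" unfolding \<beta>_def by (rule linH)
  have DVv: "DV y v = (\<Sum>b\<in>Basis. \<beta> b *\<^sub>R Jinv b)"
    unfolding DV_def \<beta>_def using iter_swap[OF H_smooth open_UNIV UNIV_I, of v _ "[]"] by simp
  have X: "iter_dderiv H [DV y v, v] y = 0"
  proof -
    have "\<beta> (DV y v) = - \<beta> (DV y v)" unfolding DVv using skew[OF lb lb] .
    then show ?thesis unfolding \<beta>_def by simp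
  qed
  have X': "iter_dderiv H [v, DV y v] y = 0"
    using iter_swap[OF H_smooth open_UNIV UNIV_I, of v "DV y v" "[]"] X by simp
  have Gv: "G2 y v = (1/12) * T"
    unfolding G2_def T_def using X X' by (simp add: v_def)
  have "4 * phi 3 y 0 = (1/2) * ((1/2) * ((1/2) * T)) + (3/2) * (- ((1/12) * T))"
    using lev3[OF y] unfolding g using z1 z2 t1 t3 Gv by simp
  then show ?thesis by simp
qed


lemma iter_zero: "iter_dderiv (\<lambda>_. 0::real) vs = (\<lambda>_::'a::real_normed_vector. 0)"
proof (induction vs)
  case Nil then show ?case by simp
next
  case (Cons v vs)
  have "frechet_derivative (\<lambda>_::'a. 0::real) (at x) = (\<lambda>_. 0)" for x
    using frechet_derivative_at[OF has_derivative_const[of "0::real" "at x"]] by simp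
  then show ?case using Cons by (simp add: iter_dderiv.simps(2))
qed

lemma smooth_zero: "smooth_on S (\<lambda>_::'a::real_normed_vector. 0::real)"
  unfolding smooth_on_def iter_zero by simp

lemma vv_cont: "continuous_on UNIV vv"
proof -
  have "continuous_on UNIV (\<lambda>z. \<Sum>b\<in>Basis. iter_dderiv H [b] z *\<^sub>R Jinv b)"
    by (intro continuous_intros smooth_cont[OF H_smooth])
  then show ?thesis unfolding vv_def[abs_def] .
qed

lemma grad_H: "Jinv (grad H y) = vv y"
  unfolding grad_def vv_def
  by (simp add: linear_sum[OF Jinv_linear] linear_scale[OF Jinv_linear] o_def iter_dderiv.simps(2))

lemma final:
  shows "\<forall>K. compact K \<and> K \<subseteq> V \<longrightarrow>
     (\<exists>C \<delta>. \<delta> > 0 \<and> (\<forall>y\<in>K. \<forall>h\<in>U. \<bar>h\<bar> < \<delta> \<longrightarrow>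
        \<bar>H y - (Hh (y, h) - h^2 / 24 * hess_form (\<lambda>z. Hh (z, h)) y (Jinv (grad H y)))\<bar>
          \<le> C * h^4))"
proof (intro allI impI)
  fix K assume K: "compact K \<and> K \<subseteq> V"
  obtain \<delta> where \<delta>: "\<delta> > 0" "cball 0 \<delta> \<subseteq> U" using U_open U0 open_contains_cball by blast
  define KT where "KT = K \<times> cball (0::real) \<delta>"
  have KTc: "compact KT" using K by (simp add: KT_def compact_Times)
  have KTs: "KT \<subseteq> V \<times> U" using K \<delta> by (auto simp: KT_def)
  obtain M4 where M4: "\<And>p. p \<in> KT \<Longrightarrow> \<bar>iter_dderiv Hh (replicate 4 (0,1)) p\<bar> \<le> M4"
    using continuous_on_compact_bound[OF KTc continuous_on_subset[OF smooth_cont[OF Hh_smooth] KTs]]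
    by (metis real_norm_def)
  define q where "q p = iter_dderiv Hh [(0,1),(0,1),(vv (fst p),0),(vv (fst p),0)] p" for p
  define q' where "q' p = (\<Sum>c\<in>Basis. ((vv (fst p),0) \<bullet> c) *
      (\<Sum>d\<in>Basis. ((vv (fst p),0) \<bullet> d) * iter_dderiv Hh [(0,1),(0,1),c,d] p))" for p
  have qq: "q p = q' p" if "p \<in> KT" for p
  proof -
    have pVU: "p \<in> V \<times> U" using that KTs by auto
    have "q p = (\<Sum>c\<in>Basis. ((vv (fst p),0) \<bullet> c) * iter_dderiv Hh [(0,1),(0,1),c,(vv (fst p),0)] p)"
      unfolding q_def using lin_depth[OF Hh_smooth VU_open pVU, where ws="[(0,1),(0,1)]" and u="(vv (fst p),0)"
          and vs="[(vv (fst p),0)]"] by simp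
    also have "\<dots> = q' p"
      unfolding q'_def
    proof (rule sum.cong[OF refl])
      fix c :: "((real^'n) \<times> (real^'n)) \<times> real"
      show "((vv (fst p),0) \<bullet> c) * iter_dderiv Hh [(0,1),(0,1),c,(vv (fst p),0)] p =
        ((vv (fst p),0) \<bullet> c) * (\<Sum>d\<in>Basis. ((vv (fst p),0) \<bullet> d) * iter_dderiv Hh [(0,1),(0,1),c,d] p)"
        using lin_depth[OF Hh_smooth VU_open pVU, where ws="[(0,1),(0,1),c]" and u="(vv (fst p),0)"
          and vs="[]"] by simp
    qed
    finally show ?thesis .
  qed
  have vc: "continuous_on KT (\<lambda>p. vv (fst p))"
    using continuous_on_compose[OF continuous_on_fst[OF continuous_on_id] continuous_on_subset[OF vv_cont]]
    by (simp add: o_def)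
  have ic: "continuous_on KT (iter_dderiv Hh vs)" for vs
    using continuous_on_subset[OF smooth_cont[OF Hh_smooth] KTs] .
  have "continuous_on KT q'"
    unfolding q'_def by (intro continuous_intros vc ic)
  then have qc: "continuous_on KT q" using qq continuous_on_cong by metis
  obtain M2 where M2: "\<And>p. p \<in> KT \<Longrightarrow> \<bar>q p\<bar> \<le> M2"
    using continuous_on_compact_bound[OF KTc qc] by (metis real_norm_def)
  show "\<exists>C \<delta>. \<delta> > 0 \<and> (\<forall>y\<in>K. \<forall>h\<in>U. \<bar>h\<bar> < \<delta> \<longrightarrow>
        \<bar>H y - (Hh (y, h) - h^2 / 24 * hess_form (\<lambda>z. Hh (z, h)) y (Jinv (grad H y)))\<bar>
          \<le> C * h^4)"
  proof (intro exI conjI ballI impI)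
    show "\<delta> > 0" by (rule \<delta>(1))
    fix y h assume yK: "y \<in> K" and hU: "h \<in> U" and hd: "\<bar>h\<bar> < \<delta>"
    have y: "y \<in> V" using yK K by auto
    define v where "v = vv y"
    define A where "A = iter_dderiv H [v, v] y"
    have hess: "hess_form (\<lambda>z. Hh (z, h)) y (Jinv (grad H y)) = iter_dderiv Hh [(v,0),(v,0)] (y,h)"
      using hess_Hh[OF y hU] grad_H by (simp add: v_def)
    have inU: "t \<in> U" if "-\<delta> \<le> t" "t \<le> \<delta>" for t
      using that \<delta>(2) by (auto simp: dist_real_def)
    show "\<bar>H y - (Hh (y, h) - h^2 / 24 * hess_form (\<lambda>z. Hh (z, h)) y (Jinv (grad H y)))\<bar>
          \<le> (M4 / 24 + M2 / 48) * h^4"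
    proof (cases "h = 0")
      case True
      then show ?thesis using H0[OF y] by simp
    next
      case False
      have "\<exists>t. (if h < 0 then h < t \<and> t < 0 else 0 < t \<and> t < h) \<and>
          phi 0 y h = (\<Sum>m<4. phi m y 0 / fact m * (h - 0) ^ m) + phi 4 y t / fact 4 * (h - 0) ^ 4"
        by (rule Taylor[where a="-\<delta>" and b=\<delta>]) (use \<delta> hd False in \<open>auto intro: phi_deriv[OF y] inU\<close>)
      then obtain t1 where t1a: "if h < 0 then h < t1 \<and> t1 < 0 else 0 < t1 \<and> t1 < h"
        and t1b: "phi 0 y h = (\<Sum>m<4. phi m y 0 / fact m * (h - 0) ^ m) + phi 4 y t1 / fact 4 * (h - 0) ^ 4" by blast
      have t1: "\<bar>t1\<bar> < \<delta>" "phi 0 y h = (\<Sum>m<4. phi m y 0 / fact m * (h - 0) ^ m) + phi 4 y t1 / fact 4 * (h - 0) ^ 4" using t1a t1b hd by (auto split: if_splits)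
      have s4: "(\<Sum>m<4. phi m y 0 / fact m * (h - 0) ^ m) = H y + (A / 24) * h^2"
        using H0[OF y] E[OF y] F[OF y] G[OF y] by (simp add: eval_nat_numeral phi0 A_def v_def)
      have Hhe: "Hh (y,h) = H y + (A / 24) * h^2 + phi 4 y t1 / 24 * h^4"
        using t1(2) s4 by (simp add: phi0 eval_nat_numeral)
      have p4: "\<bar>phi 4 y t1\<bar> \<le> M4"
        using M4[of "(y,t1)"] yK t1(1) by (simp add: KT_def phi_def)
      define dq where "dq m s = iter_dderiv Hh (replicate m (0,1) @ [(v,0),(v,0)]) (y,s)" for m s
      have dqd: "(dq m has_real_derivative dq (Suc m) s) (at s)" if "s \<in> U" for m s
        unfolding dq_def[abs_def] using dt[OF y that, of "replicate m (0,1) @ [(v,0),(v,0)]"] by simp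
      have "\<exists>t. (if h < 0 then h < t \<and> t < 0 else 0 < t \<and> t < h) \<and>
          dq 0 h = (\<Sum>m<2. dq m 0 / fact m * (h - 0) ^ m) + dq 2 t / fact 2 * (h - 0) ^ 2"
        by (rule Taylor[where a="-\<delta>" and b=\<delta>]) (use \<delta> hd False in \<open>auto intro: dqd inU\<close>)
      then obtain t2 where t2a: "if h < 0 then h < t2 \<and> t2 < 0 else 0 < t2 \<and> t2 < h"
        and t2b: "dq 0 h = (\<Sum>m<2. dq m 0 / fact m * (h - 0) ^ m) + dq 2 t2 / fact 2 * (h - 0) ^ 2" by blast
      have t2: "\<bar>t2\<bar> < \<delta>" "dq 0 h = (\<Sum>m<2. dq m 0 / fact m * (h - 0) ^ m) + dq 2 t2 / fact 2 * (h - 0) ^ 2" using t2a t2b hd by (auto split: if_splits)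
      have yU0: "(y,0) \<in> V \<times> U" using y U0 by simp
      have dq0: "dq 0 0 = A"
        unfolding dq_def A_def using slice[OF H_V U0 _ y, of "[]" "[v,v]"] H0 by simp
      have dq1: "dq 1 0 = 0"
      proof -
        have "dq 1 0 = iter_dderiv Hh [(0,1),(v,0),(v,0)] (y,0)" by (simp add: dq_def)
        also have "\<dots> = iter_dderiv Hh [(v,0),(0,1),(v,0)] (y,0)"
          using iter_swap[OF Hh_smooth VU_open yU0, of "(0,1)" "(v,0)" "[(v,0)]"] .
        also have "\<dots> = iter_dderiv Hh [(v,0),(v,0),(0,1)] (y,0)"
          using iter_swap1[OF Hh_smooth VU_open yU0, of "(v,0)" "(0,1)" "(v,0)" "[]"] .
        also have "\<dots> = iter_dderiv (\<lambda>_. 0) [v,v] y"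
          using slice[OF smooth_zero U0 _ y, of "[(0,1)]" "[v,v]"] E by (simp add: phi_def)
        finally show ?thesis by (simp add: iter_zero)
      qed
      have dq2: "\<bar>dq 2 t2\<bar> \<le> M2"
        using M2[of "(y,t2)"] yK t2(1) by (simp add: KT_def q_def dq_def v_def numeral_2_eq_2)
      have Qe: "iter_dderiv Hh [(v,0),(v,0)] (y,h) = A + dq 2 t2 / 2 * h^2"
        using t2(2) dq0 dq1 by (simp add: dq_def eval_nat_numeral)
      have "H y - (Hh (y, h) - h^2 / 24 * hess_form (\<lambda>z. Hh (z, h)) y (Jinv (grad H y)))
          = h^4 * (dq 2 t2 / 48 - phi 4 y t1 / 24)"
        unfolding hess Qe Hhe by (simp add: algebra_simps power2_eq_square power4_eq_xxxx)
      also have "\<bar>\<dots>\<bar> = h^4 * \<bar>dq 2 t2 / 48 - phi 4 y t1 / 24\<bar>"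
        by (simp add: abs_mult)
      also have "\<dots> \<le> h^4 * (M2 / 48 + M4 / 24)"
        using p4 dq2 by (intro mult_left_mono) auto
      finally show ?thesis by (simp add: algebra_simps)
    qed
  qed
qed


end


theorem mainTheorem5:
  fixes H :: "((real^'n) \<times> (real^'n)) \<Rightarrow> real"
    and Hh :: "((real^'n) \<times> (real^'n)) \<times> real \<Rightarrow> real"
    and V :: "((real^'n) \<times> (real^'n)) set"
    and U :: "real set"
  assumes H_smooth: "smooth_on UNIV H"
    and V_open: "open V"
    and U_open: "open U" and U_interval: "is_interval U" and U0: "0 \<in> U"
    and Hh_smooth: "smooth_on (V \<times> U) Hh"
    and PDE: "\<And>y t. y \<in> V \<Longrightarrow> t \<in> U \<Longrightarrow>
       ((\<lambda>s. s * Hh (y, s)) has_real_derivative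
          H (y + (t / 2) *\<^sub>R Jinv (grad (\<lambda>z. Hh (z, t)) y))) (at t)"
  shows "\<forall>K. compact K \<and> K \<subseteq> V \<longrightarrow>
     (\<exists>C \<delta>. \<delta> > 0 \<and> (\<forall>y\<in>K. \<forall>h\<in>U. \<bar>h\<bar> < \<delta> \<longrightarrow>
        \<bar>H y - (Hh (y, h) - h^2 / 24 * hess_form (\<lambda>z. Hh (z, h)) y (Jinv (grad H y)))\<bar>
          \<le> C * h^4))"
proof -
  interpret hsetup H Hh V U
    by (rule hsetup.intro[OF H_smooth V_open U_open U0 Hh_smooth PDE])
  show ?thesis by (rule final)
qed

end
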